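(* Let $K\subseteq[0,1]^n$ be compact and let $f:K\to[0,1]$ be continuous and polynomially bounded on $K$. Then there exist $\epsilon>0$ and an integer $t_0$ such that for every integer $t\ge t_0$, $$f(p)-\frac14\,\mathbb{P}_p\!\left[f(Z_{t,\epsilon})\ge\tfrac12\right]\ \ge\ \frac18 f(p)\qquad\text{for all } p\in K.$$
   Context: For $p\in[0,1]^n$, let $X_1,X_2,\dots$ be i.i.d. random vectors in $\{0,1\}^n$ with independent Bernoulli($p_i$) coordinates, $\bar X_t=(X_1+\dots+X_t)/t$; $\mathbb{P}_p$ denotes probability under this law. $\mathcal{B}_\infty(K,\epsilon)=\{x\in\mathbb{R}^n:\exists q\in K,\ \|x-q\|_\infty<\epsilon\}$. $Y_{t,\epsilon}$ has the conditional law of $\bar X_t$ given $\bar X_t\in\mathcal{B}_\infty(K,\epsilon)$ (obtained by resampling $\bar X_t$ until it lies in $\mathcal{B}_\infty(K,\epsilon)$). $\Pi_K:[0,1]^n\to K$ is a fixed (arbitrarily chosen, not necessarily continuous) map with $\|\Pi_K(x)-x\|_\infty\le\|q-x\|_\infty$ for all $x\in[0,1]^n$, $q\in K$, and $Z_{t,\epsilon}=\Pi_K(Y_{t,\epsilon})$. For a partition $[n]=A\sqcup S\sqcup B$, the open face is $F_{A,S,B}=\{p\in[0,1]^n: p_i=0\ (i\in A),\ 0<p_i<1\ (i\in S),\ p_i=1\ (i\in B)\}$. For $T\subseteq[n]$, $p^T=\prod_{i\in T}p_i$, $(1-p)^T=\prod_{i\in T}(1-p_i)$. $f:K\to[0,1]$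 is polynomially bounded on $K$ if there exist an integer $m\ge0$ and a real $c>0$ such that for every open face $F_{A,S,B}$: if some $q\in K\cap F_{A,S,B}$ has $f(q)>0$, then $f(p)\ge c\left((1-p)^A p^S(1-p)^S p^B\right)^m$ for all $p\in K$. *)

theory Defs
  imports "HOL-Analysis.Analysis" "HOL-Probability.Probability"
begin

text \<open>Points of [0,1]^n are functions from a finite index type 'n (with n = CARD('n)).\<close>

definition unit_cube :: "('n::finite \<Rightarrow> real) set" where
  "unit_cube = {p. \<forall>i. 0 \<le> p i \<and> p i \<le> 1}"

definition linf_dist :: "('n::finite \<Rightarrow> real) \<Rightarrow> ('n \<Rightarrow> real) \<Rightarrow> real" where
  "linf_dist x q = Max (range (\<lambda>i. \<bar>x i - q i\<bar>))"

definition linf_nbhd :: "('n::finite \<Rightarrow> real) set \<Rightarrow> real \<Rightarrow> ('n \<Rightarrow> real) set" where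
  "linf_nbhd K \<epsilon> = {x. \<exists>q\<in>K. linf_dist x q < \<epsilon>}"

definition open_face :: "'n::finite set \<Rightarrow> 'n set \<Rightarrow> 'n set \<Rightarrow> ('n \<Rightarrow> real) set" where
  "open_face A S B = {p \<in> unit_cube. (\<forall>i\<in>A. p i = 0) \<and> (\<forall>i\<in>S. 0 < p i \<and> p i < 1) \<and> (\<forall>i\<in>B. p i = 1)}"

definition is_partition3 :: "'n set \<Rightarrow> 'n set \<Rightarrow> 'n set \<Rightarrow> bool" where
  "is_partition3 A S B \<longleftrightarrow> A \<union> S \<union> B = UNIV \<and> A \<inter> S = {} \<and> A \<inter> B = {} \<and> S \<inter> B = {}"

definition poly_bounded :: "('n::finite \<Rightarrow> real) set \<Rightarrow> (('n \<Rightarrow> real) \<Rightarrow> real) \<Rightarrow> bool" where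
  "poly_bounded K f \<longleftrightarrow> (\<exists>m::nat. \<exists>c::real. c > 0 \<and>
     (\<forall>A S B. is_partition3 A S B \<longrightarrow> (\<exists>q \<in> K \<inter> open_face A S B. f q > 0) \<longrightarrow>
        (\<forall>p\<in>K. f p \<ge> c * ((\<Prod>i\<in>A. 1 - p i) * (\<Prod>i\<in>S. p i) * (\<Prod>i\<in>S. 1 - p i) * (\<Prod>i\<in>B. p i)) ^ m)))"

text \<open>Law of the empirical mean of t i.i.d. vectors with independent Bernoulli(p_i) coordinates:
  coordinates are independent Binomial(t,p_i)/t.\<close>
definition Xbar_pmf :: "nat \<Rightarrow> ('n::finite \<Rightarrow> real) \<Rightarrow> ('n \<Rightarrow> real) pmf" where
  "Xbar_pmf t p = Pi_pmf UNIV 0 (\<lambda>i. map_pmf (\<lambda>k. real k / real t) (binomial_pmf t (p i)))"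

definition Y_pmf :: "nat \<Rightarrow> real \<Rightarrow> ('n::finite \<Rightarrow> real) set \<Rightarrow> ('n \<Rightarrow> real) \<Rightarrow> ('n \<Rightarrow> real) pmf" where
  "Y_pmf t \<epsilon> K p = cond_pmf (Xbar_pmf t p) (linf_nbhd K \<epsilon>)"

end

theory Submission
  imports Defs
begin

lemma linf_ge: "\<bar>x i - q i\<bar> \<le> linf_dist x q"
  unfolding linf_dist_def by (rule Max_ge) auto

lemma linf_le_iff: "linf_dist x q \<le> a \<longleftrightarrow> (\<forall>i. \<bar>x i - q i\<bar> \<le> a)"
  unfolding linf_dist_def by (subst Max_le_iff) auto

lemma linf_less_iff: "linf_dist x q < a \<longleftrightarrow> (\<forall>i. \<bar>x i - q i\<bar> < a)"
  unfolding linf_dist_def by (subst Max_less_iff) auto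

lemma linf_nonneg: "0 \<le> linf_dist x q"
  using linf_ge[of x _ q] by (meson abs_ge_zero order_trans)

lemma linf_sym: "linf_dist x q = linf_dist q x"
  unfolding linf_dist_def by (simp add: abs_minus_commute)

lemma linf_triangle: "linf_dist x z \<le> linf_dist x y + linf_dist y z"
proof -
  have "\<bar>x i - z i\<bar> \<le> linf_dist x y + linf_dist y z" for i
    using linf_ge[of x i y] linf_ge[of y i z] by linarith
  thus ?thesis by (simp add: linf_le_iff)
qed

lemma linf_attained: "\<exists>i. \<bar>x i - q i\<bar> = linf_dist x q"
proof -
  have "Max (range (\<lambda>i. \<bar>x i - q i\<bar>)) \<in> range (\<lambda>i. \<bar>x i - q i\<bar>)"
    by (rule Max_in) auto
  then obtain i where "Max (range (\<lambda>i. \<bar>x i - q i\<bar>)) = \<bar>x i - q i\<bar>" by (meson rangeE)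
  thus ?thesis unfolding linf_dist_def by metis
qed

lemma dist_le_linf:
  fixes x y :: "'n::finite \<Rightarrow> real"
  shows "dist x y \<le> 2 * linf_dist x y"
proof (rule field_le_epsilon)
  fix e :: real assume e: "e > 0"
  obtain N where N: "(1/2::real)^N < e"
    using real_arch_pow_inv[of e "1/2"] e by auto
  have "Max {dist (x (from_nat n)) (y (from_nat n))|n. n \<le> N} \<le> linf_dist x y"
  proof (subst Max_le_iff)
    show "finite {dist (x (from_nat n)) (y (from_nat n))|n. n \<le> N}" by auto
    show "{dist (x (from_nat n)) (y (from_nat n))|n. n \<le> N} \<noteq> {}" by auto
    show "\<forall>a\<in>{dist (x (from_nat n)) (y (from_nat n)) |n. n \<le> N}. a \<le> linf_dist x y"
      using linf_ge by (auto simp: dist_real_def)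
  qed
  then show "dist x y \<le> 2 * linf_dist x y + e"
    using dist_fun_le_dist_first_terms[of x y N] N by linarith
qed

lemma closed_coord_set:
  fixes T :: "real set"
  assumes "closed T"
  shows "closed {x::'n::finite \<Rightarrow> real. x i \<in> T}"
proof -
  have "continuous_on UNIV (\<lambda>x::'n \<Rightarrow> real. x i)" by simp
  then have "closed ((\<lambda>x::'n \<Rightarrow> real. x i) -` T)"
    using assms continuous_closed_vimage continuous_on_eq_continuous_at open_UNIV by blast
  thus ?thesis by (simp add: vimage_def)
qed

definition faceC :: "'n set \<Rightarrow> 'n set \<Rightarrow> ('n \<Rightarrow> real) set" where
  "faceC A B = {x. (\<forall>i\<in>A. x i = 0) \<and> (\<forall>i\<in>B. x i = 1)}"

lemma closed_faceC: "closed (faceC A (B::'n::finite set))"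
proof -
  have e: "faceC A B = (\<Inter>i\<in>A. {x. x i \<in> {0}}) \<inter> (\<Inter>i\<in>B. {x. x i \<in> {1}})"
    unfolding faceC_def by auto
  show ?thesis unfolding e by (intro closed_Int closed_INT ballI closed_coord_set closed_singleton)
qed

lemma separate:
  fixes S T :: "('n::finite \<Rightarrow> real) set"
  assumes "compact S" "closed T" "S \<inter> T = {}"
  shows "\<exists>d>0. \<forall>x\<in>S. \<forall>y\<in>T. d \<le> dist x y"
proof (cases "S = {} \<or> T = {}")
  case True thus ?thesis by (auto intro: exI[of _ 1])
next
  case False
  have "continuous_on S (\<lambda>x. infdist x T)" by (intro continuous_intros)
  then obtain x0 where x0: "x0 \<in> S" "\<forall>y\<in>S. infdist x0 T \<le> infdist y T"
    using continuous_attains_inf[OF assms(1)] False by blast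
  have "infdist x0 T \<noteq> 0" using in_closed_iff_infdist_zero[OF assms(2)] False assms(3) x0 by auto
  hence pos: "infdist x0 T > 0" using infdist_nonneg[of x0 T] by linarith
  show ?thesis
    apply (rule exI[of _ "infdist x0 T"])
    using pos x0 infdist_le by (meson order_trans)
qed

lemma pow_tail_bound:
  fixes q :: real
  assumes q: "0 \<le> q" "q \<le> (1/4)^R" and j: "t \<le> R * j" and m: "R * m \<le> t" and R: "R \<ge> 1"
  shows "q ^ j \<le> (1/4)^(t - R*m) * q ^ m"
proof -
  have jm: "m \<le> j"
    using mult_le_cancel1[of R m j] j m R by linarith
  have "q ^ (j - m) \<le> ((1/4)^R) ^ (j - m)" by (intro power_mono q)
  also have "((1/4::real)^R) ^ (j - m) = (1/4) ^ (R * (j - m))" by (simp add: power_mult)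
  also have "(1/4::real) ^ (R * (j - m)) \<le> (1/4)^(t - R*m)"
    by (rule power_decreasing) (use j in \<open>auto simp: diff_mult_distrib2\<close>)
  finally have h: "q ^ (j - m) \<le> (1/4)^(t - R*m)" .
  have "q ^ j = q ^ m * q ^ (j - m)" using jm by (simp add: power_add[symmetric])
  also have "\<dots> \<le> q ^ m * (1/4)^(t - R*m)" using h q by (intro mult_left_mono) auto
  finally show ?thesis by (simp add: mult.commute)
qed

lemma binom_measure_le_sum:
  assumes "0 \<le> p" "p \<le> 1"
  shows "measure_pmf.prob (binomial_pmf t p) A = (\<Sum>k\<in>A \<inter> {..t}. real (t choose k) * p^k * (1-p)^(t-k))"
proof -
  have sub: "set_pmf (binomial_pmf t p) \<subseteq> {..t}"
    unfolding set_pmf_binomial_eq[OF assms] by auto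
  have "measure_pmf.prob (binomial_pmf t p) A = measure_pmf.prob (binomial_pmf t p) (A \<inter> set_pmf (binomial_pmf t p))"
    by (simp only: measure_Int_set_pmf)
  also have "A \<inter> set_pmf (binomial_pmf t p) = (A \<inter> {..t}) \<inter> set_pmf (binomial_pmf t p)"
    using sub by blast
  also have "measure_pmf.prob (binomial_pmf t p) ((A \<inter> {..t}) \<inter> set_pmf (binomial_pmf t p)) = measure_pmf.prob (binomial_pmf t p) (A \<inter> {..t})"
    by (simp only: measure_Int_set_pmf)
  also have "\<dots> = sum (pmf (binomial_pmf t p)) (A \<inter> {..t})"
    by (rule measure_measure_pmf_finite) simp
  also have "\<dots> = (\<Sum>k\<in>A \<inter> {..t}. real (t choose k) * p^k * (1-p)^(t-k))"
    by (rule sum.cong) (simp_all only: pmf_binomial[OF assms])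
  finally show ?thesis .
qed

lemma binom_upper_tail:
  assumes p: "0 \<le> p" "p \<le> (1/4)^R" and m: "R * m \<le> t" and R: "R \<ge> 1"
  shows "measure_pmf.prob (binomial_pmf t p) {k. t \<le> R * k} \<le> 2^t * (1/4)^(t - R*m) * p^m"
proof -
  have "(1/4::real)^R \<le> 1" by (rule power_le_one) auto
  hence p1: "p \<le> 1" using p(2) by linarith
  have "measure_pmf.prob (binomial_pmf t p) {k. t \<le> R * k} = (\<Sum>k\<in>{k. t \<le> R * k} \<inter> {..t}. real (t choose k) * p^k * (1-p)^(t-k))"
    using p(1) p1 by (rule binom_measure_le_sum)
  also have "\<dots> \<le> (\<Sum>k\<in>{..t}. real (t choose k) * ((1/4)^(t - R*m) * p^m))"
  proof (rule sum_le_included[where i=id])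
    show "\<forall>y\<in>{..t}. 0 \<le> real (t choose y) * ((1 / 4) ^ (t - R * m) * p ^ m)" using p by auto
    show "\<forall>x\<in>{k. t \<le> R * k} \<inter> {..t}. \<exists>y\<in>{..t}. id y = x \<and> real (t choose x) * p ^ x * (1 - p) ^ (t - x) \<le> real (t choose y) * ((1 / 4) ^ (t - R * m) * p ^ m)"
    proof
      fix x assume x: "x \<in> {k. t \<le> R * k} \<inter> {..t}"
      have "real (t choose x) * p ^ x * (1 - p) ^ (t - x) \<le> real (t choose x) * p ^ x * 1"
        using p p1 by (intro mult_left_mono power_le_one) auto
      also have "\<dots> \<le> real (t choose x) * ((1 / 4) ^ (t - R * m) * p ^ m)"
      proof -
        have "p ^ x \<le> (1 / 4) ^ (t - R * m) * p ^ m" using pow_tail_bound[OF p, of t x m] x m R by auto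
        thus ?thesis by (simp add: mult_left_mono)
      qed
      finally show "\<exists>y\<in>{..t}. id y = x \<and> real (t choose x) * p ^ x * (1 - p) ^ (t - x) \<le> real (t choose y) * ((1 / 4) ^ (t - R * m) * p ^ m)"
        using x by auto
    qed
  qed auto
  also have "\<dots> = (\<Sum>k\<le>t. real (t choose k)) * ((1/4)^(t - R*m) * p^m)"
    by (simp add: sum_distrib_right)
  also have "(\<Sum>k\<le>t. real (t choose k)) = 2^t"
    using choose_row_sum[of t] by (metis of_nat_numeral of_nat_power of_nat_sum)
  finally show ?thesis by simp
qed

lemma binom_lower_tail:
  assumes p: "0 \<le> p" "p \<le> 1" "1 - p \<le> (1/4)^R" and m: "R * m \<le> t" and R: "R \<ge> 1"
  shows "measure_pmf.prob (binomial_pmf t p) {k. k \<le> t \<and> t \<le> R * (t - k)} \<le> 2^t * (1/4)^(t - R*m) * (1-p)^m"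
proof -
  have "measure_pmf.prob (binomial_pmf t p) {k. k \<le> t \<and> t \<le> R * (t - k)} = (\<Sum>k\<in>{k. k \<le> t \<and> t \<le> R * (t - k)} \<inter> {..t}. real (t choose k) * p^k * (1-p)^(t-k))"
    using p(1,2) by (rule binom_measure_le_sum)
  also have "\<dots> \<le> (\<Sum>k\<in>{..t}. real (t choose k) * ((1/4)^(t - R*m) * (1-p)^m))"
  proof (rule sum_le_included[where i=id])
    show "\<forall>y\<in>{..t}. 0 \<le> real (t choose y) * ((1 / 4) ^ (t - R * m) * (1-p) ^ m)" using p by auto
    show "\<forall>x\<in>{k. k \<le> t \<and> t \<le> R * (t - k)} \<inter> {..t}. \<exists>y\<in>{..t}. id y = x \<and> real (t choose x) * p ^ x * (1 - p) ^ (t - x) \<le> real (t choose y) * ((1 / 4) ^ (t - R * m) * (1-p) ^ m)"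
    proof
      fix x assume x: "x \<in> {k. k \<le> t \<and> t \<le> R * (t - k)} \<inter> {..t}"
      have "real (t choose x) * p ^ x * (1 - p) ^ (t - x) \<le> real (t choose x) * 1 * (1 - p) ^ (t - x)"
        using p by (intro mult_left_mono mult_right_mono power_le_one) auto
      also have "\<dots> \<le> real (t choose x) * ((1 / 4) ^ (t - R * m) * (1-p) ^ m)"
      proof -
        have "(1-p) ^ (t-x) \<le> (1 / 4) ^ (t - R * m) * (1-p) ^ m" using pow_tail_bound[of "1-p" R t "t-x" m] x m R p by auto
        thus ?thesis by (simp add: mult_left_mono)
      qed
      finally show "\<exists>y\<in>{..t}. id y = x \<and> real (t choose x) * p ^ x * (1 - p) ^ (t - x) \<le> real (t choose y) * ((1 / 4) ^ (t - R * m) * (1-p) ^ m)"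
        using x by auto
    qed
  qed auto
  also have "\<dots> = (\<Sum>k\<le>t. real (t choose k)) * ((1/4)^(t - R*m) * (1-p)^m)"
    by (simp add: sum_distrib_right)
  also have "(\<Sum>k\<le>t. real (t choose k)) = 2^t"
    using choose_row_sum[of t] by (metis of_nat_numeral of_nat_power of_nat_sum)
  finally show ?thesis by simp
qed

abbreviation mu :: "nat \<Rightarrow> real \<Rightarrow> real pmf" where
  "mu t q \<equiv> map_pmf (\<lambda>k. real k / real t) (binomial_pmf t q)"

lemma Xbar_box:
  "measure_pmf.prob (Xbar_pmf t p) {x. \<forall>i. x i \<in> B i} = (\<Prod>i\<in>UNIV. measure_pmf.prob (mu t (p i)) (B i))"
proof -
  have "{x. \<forall>i. x i \<in> B i} = Pi UNIV B" by (auto simp: Pi_def)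
  thus ?thesis unfolding Xbar_pmf_def by (simp add: measure_Pi_pmf_Pi)
qed

lemma Xbar_coord:
  "measure_pmf.prob (Xbar_pmf t p) {x. x i \<in> S} = measure_pmf.prob (binomial_pmf t (p i)) {k. real k / real t \<in> S}"
proof -
  have "measure_pmf.prob (Xbar_pmf t p) {x. x i \<in> S} = measure_pmf.prob (map_pmf (\<lambda>x. x i) (Xbar_pmf t p)) S"
    by (simp add: vimage_def)
  also have "map_pmf (\<lambda>x. x i) (Xbar_pmf t p) = mu t (p i)"
    unfolding Xbar_pmf_def by (subst Pi_pmf_component) auto
  finally show ?thesis by (simp add: vimage_def)
qed

lemma Xbar_support:
  assumes "p \<in> unit_cube" "x \<in> set_pmf (Xbar_pmf t p)"
  shows "\<exists>k. k \<le> t \<and> x i = real k / real t"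
proof -
  have "x i \<in> set_pmf (mu t (p i))"
    using assms(2) unfolding Xbar_pmf_def by (subst (asm) set_Pi_pmf) (auto simp: PiE_dflt_def)
  then obtain k where k: "k \<in> set_pmf (binomial_pmf t (p i))" "x i = real k / real t" by auto
  have "0 \<le> p i" "p i \<le> 1" using assms(1) by (auto simp: unit_cube_def)
  hence "k \<le> t" using k(1) unfolding set_pmf_binomial_eq[OF \<open>0 \<le> p i\<close> \<open>p i \<le> 1\<close>] by (auto split: if_splits)
  thus ?thesis using k by auto
qed

lemma Xbar_support_cube:
  assumes "p \<in> unit_cube" "x \<in> set_pmf (Xbar_pmf t p)"
  shows "x \<in> unit_cube"
proof -
  have "0 \<le> x i \<and> x i \<le> 1" for i
  proof -
    obtain k where k: "k \<le> t" "x i = real k / real t" using Xbar_support[OF assms] by blast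
    show ?thesis
    proof (cases "t = 0")
      case True thus ?thesis using k by simp
    next
      case False
      have "real k / real t \<le> 1" using k False by (simp add: divide_le_eq_1)
      thus ?thesis using k by simp
    qed
  qed
  thus ?thesis by (simp add: unit_cube_def)
qed

lemma Xbar_dev:
  fixes p :: "'n::finite \<Rightarrow> real"
  assumes "p \<in> unit_cube" "t > 0" "a \<ge> 0"
  shows "measure_pmf.prob (Xbar_pmf t p) {x. \<exists>i. a \<le> \<bar>x i - p i\<bar>} \<le> real CARD('n) * (2 * exp (-2 * real t * a\<^sup>2))"
proof -
  have eq: "{x. \<exists>i. a \<le> \<bar>x i - p i\<bar>} = (\<Union>i\<in>UNIV. {x. x i \<in> {y. a \<le> \<bar>y - p i\<bar>}})" by auto
  have "measure_pmf.prob (Xbar_pmf t p) {x. \<exists>i. a \<le> \<bar>x i - p i\<bar>} \<le> (\<Sum>i\<in>UNIV. measure_pmf.prob (Xbar_pmf t p) {x. x i \<in> {y. a \<le> \<bar>y - p i\<bar>}})"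
    unfolding eq by (rule measure_pmf.finite_measure_subadditive_finite) auto
  also have "\<dots> \<le> (\<Sum>i\<in>(UNIV::'n set). 2 * exp (-2 * real t * a\<^sup>2))"
  proof (rule sum_mono)
    fix i
    have pi: "p i \<in> {0..1}" using assms(1) by (auto simp: unit_cube_def)
    have "measure_pmf.prob (Xbar_pmf t p) {x. x i \<in> {y. a \<le> \<bar>y - p i\<bar>}} = measure_pmf.prob (binomial_pmf t (p i)) {k. \<bar>real k / real t - p i\<bar> \<ge> a}"
      using Xbar_coord[of t p i "{y. a \<le> \<bar>y - p i\<bar>}"] by simp
    also have "\<dots> \<le> 2 * exp (-2 * real t * a\<^sup>2)"
      using binomial_distribution.prob_abs_ge'[OF binomial_distribution.intro[OF pi] assms(2) assms(3)] by simp
    finally show "measure_pmf.prob (Xbar_pmf t p) {x. x i \<in> {y. a \<le> \<bar>y - p i\<bar>}} \<le> 2 * exp (-2 * real t * a\<^sup>2)" .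
  qed
  also have "\<dots> = real CARD('n) * (2 * exp (-2 * real t * a\<^sup>2))" by simp
  finally show ?thesis .
qed

lemma cond_measure:
  assumes "measure_pmf.prob P N > 0"
  shows "measure_pmf.prob (cond_pmf P N) E = measure_pmf.prob P (N \<inter> E) / measure_pmf.prob P N"
proof -
  have ne: "set_pmf P \<inter> N \<noteq> {}"
  proof
    assume "set_pmf P \<inter> N = {}"
    hence "measure_pmf.prob P N = measure_pmf.prob P (N \<inter> set_pmf P)" by (simp add: measure_Int_set_pmf)
    also have "\<dots> = 0" using \<open>set_pmf P \<inter> N = {}\<close> by (simp add: Int_commute)
    finally show False using assms by simp
  qed
  have "measure_pmf (cond_pmf P N) = uniform_measure (measure_pmf P) N"
    using cond_pmf.rep_eq[OF ne] .
  moreover have "emeasure (measure_pmf P) N \<noteq> 0" using assms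
    by (simp add: measure_pmf.emeasure_eq_measure)
  ultimately show ?thesis
    by (simp add: measure_pmf.emeasure_eq_measure)
qed

lemma finite_eps:
  assumes "finite I" "\<forall>i\<in>I. \<exists>e>0. P i e" "\<And>i e e'. P i e \<Longrightarrow> 0 < e' \<Longrightarrow> e' \<le> e \<Longrightarrow> P i e'"
  shows "\<exists>e>(0::real). \<forall>i\<in>I. P i e"
  using assms(1,2)
proof (induction I rule: finite_induct)
  case empty thus ?case by (auto intro: exI[of _ 1])
next
  case (insert x F)
  then obtain e1 where e1: "e1 > 0" "\<forall>i\<in>F. P i e1" by auto
  obtain e2 where e2: "e2 > 0" "P x e2" using insert by auto
  show ?case
    apply (rule exI[of _ "min e1 e2"])
    using e1 e2 assms(3) by auto
qed

lemma binom_mono: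
  assumes "0 \<le> p" "p \<le> 1" "\<And>k. k \<in> A \<Longrightarrow> k \<le> t \<Longrightarrow> k \<in> B"
  shows "measure_pmf.prob (binomial_pmf t p) A \<le> measure_pmf.prob (binomial_pmf t p) B"
proof -
  have "(\<Sum>k\<in>A \<inter> {..t}. real (t choose k) * p^k * (1-p)^(t-k)) \<le> (\<Sum>k\<in>B \<inter> {..t}. real (t choose k) * p^k * (1-p)^(t-k))"
    by (rule sum_mono2) (use assms in auto)
  thus ?thesis using binom_measure_le_sum[OF assms(1,2)] by metis
qed

definition qf :: "bool \<Rightarrow> bool \<Rightarrow> real \<Rightarrow> real" where
  "qf a b x = (if a then 1 - x else if b then x else x * (1 - x))"

definition Sset :: "nat \<Rightarrow> bool \<Rightarrow> bool \<Rightarrow> real set" where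
  "Sset R a b = {y. (y < 1 / real R \<longleftrightarrow> a) \<and> (1 - 1 / real R < y \<longleftrightarrow> b)}"

definition natural :: "real \<Rightarrow> bool \<Rightarrow> bool \<Rightarrow> real \<Rightarrow> bool" where
  "natural th a b x = (if a then x \<le> 1 - th else if b then th \<le> x else th \<le> x \<and> x \<le> 1 - th)"

lemma two_pow_ge: "0 \<le> (z::real) \<Longrightarrow> z \<le> 2^m * z"
  using mult_right_mono[of 1 "2^m" z] by (simp add: one_le_power)

lemma coord_unnatural:
  assumes R: "R \<ge> 2" and t: "t > 0" and m: "R * m \<le> t" and x: "0 \<le> x" "x \<le> 1"
    and nn: "\<not> natural ((1/4)^R) a b x"
  shows "measure_pmf.prob (binomial_pmf t x) {k. real k / real t \<in> Sset R a b}
           \<le> 2^m * (2^t * (1/4)^(t - R*m)) * (qf a b x)^m"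
proof -
  define th :: real where "th = (1/4)^R"
  have th4: "th \<le> 1/4" unfolding th_def using power_decreasing[of 1 R "1/4::real"] R by simp
  have R1: "R \<ge> 1" using R by simp
  have tR: "real t > 0" "real R \<ge> 2" using t R by auto
  define C where "C = 2^t * (1/4::real)^(t - R*m)"
  have C0: "C \<ge> 0" unfolding C_def by simp
  have up: "measure_pmf.prob (binomial_pmf t x) {k. real k / real t \<in> Sset R a b} \<le> C * x^m"
    if xs: "x \<le> th" and inc: "\<And>k. k \<le> t \<Longrightarrow> real k / real t \<in> Sset R a b \<Longrightarrow> t \<le> R * k"
  proof -
    have "measure_pmf.prob (binomial_pmf t x) {k. real k / real t \<in> Sset R a b} \<le> measure_pmf.prob (binomial_pmf t x) {k. t \<le> R * k}"
      by (rule binom_mono) (use x inc in auto)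
    also have "\<dots> \<le> C * x^m" unfolding C_def
      by (rule binom_upper_tail) (use x xs m R1 th_def in auto)
    finally show ?thesis .
  qed
  have lo: "measure_pmf.prob (binomial_pmf t x) {k. real k / real t \<in> Sset R a b} \<le> C * (1-x)^m"
    if xs: "1 - x \<le> th" and inc: "\<And>k. k \<le> t \<Longrightarrow> real k / real t \<in> Sset R a b \<Longrightarrow> t \<le> R * (t - k)"
  proof -
    have "measure_pmf.prob (binomial_pmf t x) {k. real k / real t \<in> Sset R a b} \<le> measure_pmf.prob (binomial_pmf t x) {k. k \<le> t \<and> t \<le> R * (t - k)}"
      by (rule binom_mono) (use x inc in auto)
    also have "\<dots> \<le> C * (1-x)^m" unfolding C_def
      by (rule binom_lower_tail) (use x xs m R1 th_def in auto)
    finally show ?thesis .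
  qed
  have small_k: "t \<le> R * (t - k)" if "k \<le> t" "real k / real t < 1 / real R" for k
  proof -
    have "real k * real R < real t" using that tR by (simp add: field_simps)
    hence "k * R < t" by (metis of_nat_less_iff of_nat_mult)
    hence a: "R * k < t" by (simp add: mult.commute)
    have b: "2 * t \<le> R * t" using R by (rule mult_right_mono) simp
    have c: "R * (t - k) = R * t - R * k" by (simp add: diff_mult_distrib2)
    from a b c show ?thesis by linarith
  qed
  have big_k: "t \<le> R * k" if "1 / real R \<le> real k / real t" for k
  proof -
    have "real t \<le> real k * real R" using that tR by (simp add: field_simps)
    thus ?thesis by (metis of_nat_le_iff of_nat_mult mult.commute)
  qed
  have mid_k: "t \<le> R * (t - k)" if "k \<le> t" "real k / real t \<le> 1 - 1 / real R" for k
  proof -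
    have "real k * real R \<le> real t * real R - real t" using that tR by (simp add: field_simps)
    hence "real (k * R) + real t \<le> real (t * R)" by simp
    hence "k * R + t \<le> t * R" by linarith
    hence a: "R * k + t \<le> R * t" by (simp add: mult.commute)
    have c: "R * (t - k) = R * t - R * k" by (simp add: diff_mult_distrib2)
    from a c show ?thesis by linarith
  qed
  have gR: "1 / real R \<le> 1 - 1 / real R" using tR by (simp add: field_simps)
  show ?thesis
  proof (cases a)
    case True
    hence xb: "1 - x \<le> th" using nn unfolding natural_def th_def by auto
    have "measure_pmf.prob (binomial_pmf t x) {k. real k / real t \<in> Sset R a b} \<le> C * (1-x)^m"
      by (rule lo[OF xb]) (use True small_k in \<open>auto simp: Sset_def\<close>)
    also have "\<dots> \<le> 2^m * C * (1-x)^m" using two_pow_ge[of "C*(1-x)^m" m] C0 x by (simp add: mult.assoc)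
    finally show ?thesis using True by (simp add: qf_def C_def)
  next
    case False
    show ?thesis
    proof (cases b)
      case True
      hence xb: "x \<le> th" using nn False unfolding natural_def th_def by auto
      have "measure_pmf.prob (binomial_pmf t x) {k. real k / real t \<in> Sset R a b} \<le> C * x^m"
        by (rule up[OF xb]) (use True gR big_k in \<open>auto simp: Sset_def\<close>)
      also have "\<dots> \<le> 2^m * C * x^m" using two_pow_ge[of "C*x^m" m] C0 x by (simp add: mult.assoc)
      finally show ?thesis using True False by (simp add: qf_def C_def)
    next
      case nb: False
      have "x < th \<or> x > 1 - th" using nn False nb unfolding natural_def th_def by auto
      thus ?thesis
      proof
        assume xb: "x < th"
        have "measure_pmf.prob (binomial_pmf t x) {k. real k / real t \<in> Sset R a b} \<le> C * x^m"
          by (rule up) (use xb False nb big_k in \<open>auto simp: Sset_def\<close>)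
        also have "x^m \<le> 2^m * (x * (1-x))^m"
        proof -
          have h: "x * (2*x) \<le> x * 1" using xb th4 x by (intro mult_left_mono) auto
          have "2 * (x * (1 - x)) = 2*x - x * (2*x)" by (simp add: algebra_simps)
          hence "x \<le> 2 * (x * (1 - x))" using h by linarith
          hence "x^m \<le> (2 * (x * (1 - x)))^m" using x by (intro power_mono) auto
          thus ?thesis by (simp add: power_mult_distrib)
        qed
        finally show ?thesis using C0 False nb by (simp add: qf_def C_def mult_left_mono mult.assoc mult.left_commute)
      next
        assume xb: "x > 1 - th"
        have "measure_pmf.prob (binomial_pmf t x) {k. real k / real t \<in> Sset R a b} \<le> C * (1-x)^m"
          by (rule lo) (use xb False nb mid_k in \<open>auto simp: Sset_def\<close>)
        also have "(1-x)^m \<le> 2^m * (x * (1-x))^m"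
        proof -
          have h: "(1-x) * 1 \<le> (1-x) * (2*x)" using xb th4 x by (intro mult_left_mono) auto
          have "2 * (x * (1 - x)) = (1-x) * (2*x)" by (simp add: algebra_simps)
          moreover have "1 - x \<le> (1-x) * (2*x)" using h by simp
          ultimately have "1 - x \<le> 2 * (x * (1 - x))" by linarith
          hence "(1-x)^m \<le> (2 * (x * (1 - x)))^m" using x by (intro power_mono) auto
          thus ?thesis by (simp add: power_mult_distrib)
        qed
        finally show ?thesis using C0 False nb by (simp add: qf_def C_def mult_left_mono mult.assoc mult.left_commute)
      qed
    qed
  qed
qed

lemma poly_qf:
  fixes p q :: "'n::finite \<Rightarrow> real"
  assumes Ksub: "K \<subseteq> unit_cube" and c: "c \<ge> 0"
    and PB: "\<forall>A S B. is_partition3 A S B \<longrightarrow> (\<exists>q \<in> K \<inter> open_face A S B. f q > 0) \<longrightarrow>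
        (\<forall>p\<in>K. f p \<ge> c * ((\<Prod>i\<in>A. 1 - p i) * (\<Prod>i\<in>S. p i) * (\<Prod>i\<in>S. 1 - p i) * (\<Prod>i\<in>B. p i)) ^ m)"
    and q: "q \<in> K" "q \<in> faceC A' B'" "f q > 0" and p: "p \<in> K"
  shows "f p \<ge> c * (\<Prod>i\<in>UNIV. qf (i\<in>A') (i\<in>B') (p i)) ^ m"
proof -
  define Aq where "Aq = {i. q i = 0}"
  define Bq where "Bq = {i. q i = 1}"
  define Sq where "Sq = {i. q i \<noteq> 0 \<and> q i \<noteq> 1}"
  have part: "is_partition3 Aq Sq Bq" unfolding is_partition3_def Aq_def Bq_def Sq_def by auto
  have qc: "q \<in> unit_cube" using q Ksub by auto
  have "q \<in> open_face Aq Sq Bq" using qc unfolding open_face_def Aq_def Bq_def Sq_def unit_cube_def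
    by (auto simp: less_le)
  hence fp: "f p \<ge> c * ((\<Prod>i\<in>Aq. 1 - p i) * (\<Prod>i\<in>Sq. p i) * (\<Prod>i\<in>Sq. 1 - p i) * (\<Prod>i\<in>Bq. p i)) ^ m"
    using PB part q p by blast
  have pc: "p \<in> unit_cube" using p Ksub by auto
  hence p01: "0 \<le> p i" "p i \<le> 1" for i by (auto simp: unit_cube_def)
  have r: "(\<Prod>i\<in>X. g i) = (\<Prod>i\<in>UNIV. if i \<in> X then g i else 1)" for X and g :: "'n \<Rightarrow> real"
    using prod.inter_restrict[of "UNIV::'n set" g X] by simp
  have P4: "(\<Prod>i\<in>Aq. 1 - p i) * (\<Prod>i\<in>Sq. p i) * (\<Prod>i\<in>Sq. 1 - p i) * (\<Prod>i\<in>Bq. p i)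
     = (\<Prod>i\<in>UNIV. (if i \<in> Aq then 1 - p i else 1) * (if i \<in> Sq then p i else 1) * (if i \<in> Sq then 1 - p i else 1) * (if i \<in> Bq then p i else 1))"
    unfolding r[where X=Aq] r[where X=Sq] r[where X=Bq] by (simp only: prod.distrib)
  have le: "(\<Prod>i\<in>UNIV. qf (i\<in>A') (i\<in>B') (p i)) \<le> (\<Prod>i\<in>UNIV. (if i \<in> Aq then 1 - p i else 1) * (if i \<in> Sq then p i else 1) * (if i \<in> Sq then 1 - p i else 1) * (if i \<in> Bq then p i else 1))"
  proof (rule prod_mono)
    fix i :: 'n
    have a: "0 \<le> p i" "p i \<le> 1" by (rule p01)+
    have "0 \<le> p i * (1 - p i)" using a by simp
    moreover have "p i * (1 - p i) \<le> 1 - p i" using a by (simp add: mult_left_le_one_le)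
    moreover have "p i * (1 - p i) \<le> p i" using a by (simp add: mult_right_le_one_le)
    ultimately show "0 \<le> qf (i\<in>A') (i\<in>B') (p i) \<and> qf (i\<in>A') (i\<in>B') (p i) \<le> (if i \<in> Aq then 1 - p i else 1) * (if i \<in> Sq then p i else 1) * (if i \<in> Sq then 1 - p i else 1) * (if i \<in> Bq then p i else 1)"
      using q(2) a unfolding qf_def Aq_def Bq_def Sq_def faceC_def by auto
  qed
  have nn: "0 \<le> (\<Prod>i\<in>UNIV. qf (i\<in>A') (i\<in>B') (p i))"
    by (rule prod_nonneg) (use p01 in \<open>auto simp: qf_def\<close>)
  have "c * (\<Prod>i\<in>UNIV. qf (i\<in>A') (i\<in>B') (p i)) ^ m \<le> c * ((\<Prod>i\<in>Aq. 1 - p i) * (\<Prod>i\<in>Sq. p i) * (\<Prod>i\<in>Sq. 1 - p i) * (\<Prod>i\<in>Bq. p i)) ^ m"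
    unfolding P4 by (intro mult_left_mono power_mono le nn c)
  thus ?thesis using fp by linarith
qed

lemma natural_qf:
  assumes "natural th a b x" "0 \<le> th" "th \<le> 1" "0 \<le> x" "x \<le> 1"
  shows "th^2 \<le> qf a b x"
proof -
  have "th^2 \<le> th" using assms by (simp add: power2_eq_square mult_left_le_one_le)
  moreover have "\<not> a \<Longrightarrow> \<not> b \<Longrightarrow> th * th \<le> x * (1 - x)"
    using assms by (intro mult_mono) (auto simp: natural_def)
  ultimately show ?thesis using assms unfolding natural_def qf_def
    by (auto simp: power2_eq_square split: if_splits)
qed

lemma qf_nonneg: "0 \<le> x \<Longrightarrow> x \<le> 1 \<Longrightarrow> 0 \<le> qf a b x"
  by (auto simp: qf_def)

lemma pattern_prob:
  fixes p :: "'n::finite \<Rightarrow> real"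
  assumes R: "R \<ge> 2" and t: "t > 0" and m: "R * m \<le> t" and p: "p \<in> unit_cube"
    and tau: "2^m * (2^t * (1/4::real)^(t - R*m)) \<le> 1"
    and j: "\<not> natural ((1/4)^R) (j\<in>A') (j\<in>B') (p j)"
  shows "measure_pmf.prob (Xbar_pmf t p) {x. \<forall>i. x i \<in> Sset R (i\<in>A') (i\<in>B')}
     \<le> (2^m * (2^t * (1/4)^(t - R*m))) * ((1/(1/4)^R)^(2*m))^CARD('n) * (\<Prod>i\<in>UNIV. qf (i\<in>A') (i\<in>B') (p i)) ^ m"
proof -
  define th :: real where "th = (1/4)^R"
  define tau where "tau = 2^m * (2^t * (1/4::real)^(t - R*m))"
  have th0: "0 < th" "th \<le> 1" unfolding th_def by (auto simp: power_le_one)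
  have tau0: "0 \<le> tau" unfolding tau_def by simp
  have p01: "0 \<le> p i" "p i \<le> 1" for i using p by (auto simp: unit_cube_def)
  define P where "P i = measure_pmf.prob (binomial_pmf t (p i)) {k. real k / real t \<in> Sset R (i\<in>A') (i\<in>B')}" for i
  define w where "w i = (1/th)^(2*m) * (qf (i\<in>A') (i\<in>B') (p i))^m" for i
  have eq: "measure_pmf.prob (Xbar_pmf t p) {x. \<forall>i. x i \<in> Sset R (i\<in>A') (i\<in>B')} = (\<Prod>i\<in>UNIV. P i)"
    unfolding Xbar_box P_def by (simp add: vimage_def)
  have big: "1 \<le> (1/th)^(2*m)" using th0 by (simp add: one_le_power)
  have Pw: "P i \<le> (if i = j then tau else 1) * w i" for i
  proof (cases "natural th (i\<in>A') (i\<in>B') (p i)")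
    case True
    have "th^2 \<le> qf (i\<in>A') (i\<in>B') (p i)" using natural_qf[OF True] th0 p01[of i] by auto
    hence "(th^2)^m \<le> (qf (i\<in>A') (i\<in>B') (p i))^m" by (intro power_mono) (use th0 in auto)
    hence "(1/th)^(2*m) * (th^2)^m \<le> w i" unfolding w_def using th0 by (intro mult_left_mono) auto
    moreover have "(1/th)^(2*m) * (th^2)^m = 1" using th0
      by (simp add: power_mult[symmetric] power_mult_distrib[symmetric])
    ultimately have w1: "1 \<le> w i" by simp
    have "P i \<le> 1" unfolding P_def by simp
    show ?thesis
    proof (cases "i = j")
      case True thus ?thesis using j \<open>natural th _ _ _\<close> th_def by simp
    next
      case False thus ?thesis using \<open>P i \<le> 1\<close> w1 by simp
    qed
  next
    case False
    have Pi: "P i \<le> tau * (qf (i\<in>A') (i\<in>B') (p i))^m"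
      unfolding P_def tau_def using coord_unnatural[OF R t m p01[of i]] False th_def by simp
    have q0: "0 \<le> (qf (i\<in>A') (i\<in>B') (p i))^m" using qf_nonneg p01 by simp
    show ?thesis
    proof (cases "i = j")
      case True
      have "(qf (i\<in>A') (i\<in>B') (p i))^m \<le> w i"
        unfolding w_def using big q0 mult_right_mono[OF big q0] by simp
      hence "tau * (qf (i\<in>A') (i\<in>B') (p i))^m \<le> tau * w i"
        using tau0 by (rule mult_left_mono)
      thus ?thesis using Pi True by simp
    next
      case ne: False
      have "tau * (qf (i\<in>A') (i\<in>B') (p i))^m \<le> 1 * (qf (i\<in>A') (i\<in>B') (p i))^m"
        using tau tau_def q0 by (intro mult_right_mono) auto
      also have "\<dots> \<le> w i" unfolding w_def using big q0 by (intro mult_right_mono) auto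
      finally show ?thesis using Pi ne by simp
    qed
  qed
  have "(\<Prod>i\<in>UNIV. P i) \<le> (\<Prod>i\<in>UNIV. (if i = j then tau else 1) * w i)"
    by (rule prod_mono) (use Pw in \<open>auto simp: P_def\<close>)
  also have "\<dots> = tau * (\<Prod>i\<in>UNIV. w i)" by (simp add: prod.distrib)
  also have "(\<Prod>i\<in>UNIV. w i) = ((1/th)^(2*m))^CARD('n) * (\<Prod>i\<in>UNIV. qf (i\<in>A') (i\<in>B') (p i)) ^ m"
    unfolding w_def by (simp add: prod.distrib prod_power_distrib)
  finally show ?thesis unfolding eq tau_def th_def by (simp add: mult.assoc)
qed

lemma exp_lim:
  fixes a :: real and n :: real
  assumes "a > 0"
  shows "(\<lambda>t::nat. n * (2 * exp (-2 * real t * a\<^sup>2))) \<longlonglongrightarrow> 0"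
proof -
  have e: "exp (-2 * real t * a\<^sup>2) = exp (-2 * a\<^sup>2) ^ t" for t
    using exp_of_nat_mult[of t "-2 * a\<^sup>2"] by (simp add: mult.commute mult.left_commute)
  have "exp (-2 * a\<^sup>2) < 1" using assms by simp
  hence "(\<lambda>t. exp (-2 * a\<^sup>2) ^ t) \<longlonglongrightarrow> 0" by (intro LIMSEQ_realpow_zero) auto
  hence "(\<lambda>t. n * (2 * exp (-2 * a\<^sup>2) ^ t)) \<longlonglongrightarrow> n * (2 * 0)"
    by (intro tendsto_mult tendsto_const)
  thus ?thesis unfolding e by simp
qed

lemma half_lim: "(\<lambda>t::nat. C * (1/2::real)^t) \<longlonglongrightarrow> 0"
proof -
  have "(\<lambda>t. (1/2::real)^t) \<longlonglongrightarrow> 0" by (intro LIMSEQ_realpow_zero) auto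
  hence "(\<lambda>t. C * (1/2::real)^t) \<longlonglongrightarrow> C * 0" by (intro tendsto_mult tendsto_const)
  thus ?thesis by simp
qed

lemma tau_eq:
  assumes "k \<le> t"
  shows "(2::real)^t * (1/4)^(t-k) = 4^k * (1/2)^t"
proof -
  have a: "(1/4::real)^t = (1/4)^(t-k) * (1/4)^k" using assms by (simp add: power_add[symmetric])
  have b: "(2::real)^t * (1/4)^t = (1/2)^t" by (simp add: power_mult_distrib[symmetric])
  have c: "(1/4::real)^k * 4^k = 1" by (simp add: power_mult_distrib[symmetric])
  have "(2::real)^t * (1/4)^(t-k) = (2::real)^t * (1/4)^(t-k) * ((1/4)^k * 4^k)" using c by simp
  also have "\<dots> = (2^t * (1/4)^t) * 4^k" using a by (simp add: mult.assoc)
  also have "\<dots> = 4^k * (1/2)^t" using b by simp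
  finally show ?thesis .
qed

theorem lemma8:
  fixes K :: "('n::finite \<Rightarrow> real) set"
    and f :: "('n \<Rightarrow> real) \<Rightarrow> real"
    and PiK :: "('n \<Rightarrow> real) \<Rightarrow> ('n \<Rightarrow> real)"
  assumes "K \<subseteq> unit_cube" and "compact K"
    and "continuous_on K f" and "\<forall>p\<in>K. 0 \<le> f p \<and> f p \<le> 1"
    and "poly_bounded K f"
    and "\<forall>x\<in>unit_cube. PiK x \<in> K"
    and "\<forall>x\<in>unit_cube. \<forall>q\<in>K. linf_dist (PiK x) x \<le> linf_dist q x"
  shows "\<exists>\<epsilon>>0. \<exists>t0::nat. \<forall>t\<ge>t0. \<forall>p\<in>K.
           f p - 1/4 * measure_pmf.prob (Y_pmf t \<epsilon> K p) {y. f (PiK y) \<ge> 1/2} \<ge> f p / 8"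
proof -
  from assms(5) obtain m c where c: "c > 0" and PB: "\<forall>A S B. is_partition3 A S B \<longrightarrow> (\<exists>q \<in> K \<inter> open_face A S B. f q > 0) \<longrightarrow>
        (\<forall>p\<in>K. f p \<ge> c * ((\<Prod>i\<in>A. 1 - p i) * (\<Prod>i\<in>S. p i) * (\<Prod>i\<in>S. 1 - p i) * (\<Prod>i\<in>B. p i)) ^ m)"
    unfolding poly_bounded_def by blast
  have Kcl: "closed K" using assms(2) by (rule compact_imp_closed)
  define Kh where "Kh = K \<inter> f -` {1/2..}"
  have cKh: "closed Kh" unfolding Kh_def by (rule continuous_closed_preimage[OF assms(3) Kcl closed_atLeast])
  have "compact (K \<inter> Kh)" by (rule compact_Int_closed[OF assms(2) cKh])
  hence Khc: "compact Kh" unfolding Kh_def by (simp add: Int_absorb1 Int_assoc[symmetric])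
  have "\<exists>e>(0::real). \<forall>ab\<in>UNIV. (\<forall>q\<in>K \<inter> faceC (fst ab) (snd ab). f q \<le> 0) \<longrightarrow>
          (\<forall>z\<in>Kh. \<forall>y\<in>faceC (fst ab) (snd ab). e \<le> linf_dist z y)"
  proof (rule finite_eps)
    show "finite (UNIV :: ('n set \<times> 'n set) set)" by simp
    show "\<forall>ab\<in>UNIV. \<exists>e>0. (\<forall>q\<in>K \<inter> faceC (fst ab) (snd ab). f q \<le> 0) \<longrightarrow>
          (\<forall>z\<in>Kh. \<forall>y\<in>faceC (fst ab) (snd ab). e \<le> linf_dist z y)"
    proof
      fix ab :: "'n set \<times> 'n set"
      show "\<exists>e>0. (\<forall>q\<in>K \<inter> faceC (fst ab) (snd ab). f q \<le> 0) \<longrightarrow>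
          (\<forall>z\<in>Kh. \<forall>y\<in>faceC (fst ab) (snd ab). e \<le> linf_dist z y)"
      proof (cases "\<forall>q\<in>K \<inter> faceC (fst ab) (snd ab). f q \<le> 0")
        case False thus ?thesis by (auto intro: exI[of _ 1])
      next
        case True
        have "Kh \<inter> faceC (fst ab) (snd ab) = {}" using True unfolding Kh_def by force
        then obtain d where d: "d > 0" "\<forall>x\<in>Kh. \<forall>y\<in>faceC (fst ab) (snd ab). d \<le> dist x y"
          using separate[OF Khc closed_faceC] by blast
        have "\<forall>z\<in>Kh. \<forall>y\<in>faceC (fst ab) (snd ab). d/2 \<le> linf_dist z y"
        proof (intro ballI)
          fix z y assume zy: "z \<in> Kh" "y \<in> faceC (fst ab) (snd ab)"
          hence "d \<le> dist z y" using d(2) by blast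
          thus "d/2 \<le> linf_dist z y" using dist_le_linf[of z y] by linarith
        qed
        thus ?thesis using d(1) by (intro exI[of _ "d/2"]) auto
      qed
    qed
  qed (meson order_trans)
  then obtain e0 :: real where e0: "e0 > 0" and sepP: "\<And>ab. (\<forall>q\<in>K \<inter> faceC (fst ab) (snd ab). f q \<le> 0) \<Longrightarrow>
          (\<forall>z\<in>Kh. \<forall>y\<in>faceC (fst ab) (snd ab). e0 \<le> linf_dist z y)" by blast
  have "uniformly_continuous_on K f" by (rule compact_uniformly_continuous[OF assms(3,2)])
  then obtain d where d: "d > 0" "\<forall>x\<in>K. \<forall>x'\<in>K. dist x' x < d \<longrightarrow> dist (f x') (f x) < 3/14"
    unfolding uniformly_continuous_on_def by (meson divide_pos_pos zero_less_numeral)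
  define \<delta> where "\<delta> = d / 2"
  have \<delta>0: "\<delta> > 0" using d by (simp add: \<delta>_def)
  have UC: "\<bar>f z - f p\<bar> < 3/14" if "z \<in> K" "p \<in> K" "linf_dist z p < \<delta>" for z p
  proof -
    have "dist z p < d" using dist_le_linf[of z p] that(3) unfolding \<delta>_def by linarith
    thus ?thesis using d(2) that by (auto simp: dist_real_def)
  qed
  obtain N0 :: nat where N0: "2 / e0 < real N0" using reals_Archimedean2 by blast
  define R where "R = max 2 N0"
  have R2: "R \<ge> 2" unfolding R_def by simp
  have "2 / e0 < real R" using N0 unfolding R_def by linarith
  hence R_e0: "1 / real R \<le> e0 / 2" using e0 R2 by (simp add: field_simps)
  define th :: real where "th = (1/4)^R"
  have th0: "th > 0" "th \<le> 1" unfolding th_def by (auto simp: power_le_one)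
  define \<gamma> :: real where "\<gamma> = 1 / real R"
  have \<gamma>0: "0 < \<gamma>" "\<gamma> \<le> 1/2" using R2 unfolding \<gamma>_def by (auto simp: field_simps)
  define \<epsilon> where "\<epsilon> = min (e0/2) (\<delta>/2)"
  have \<epsilon>0: "\<epsilon> > 0" using e0 \<delta>0 by (simp add: \<epsilon>_def)
  define n where "n = CARD('n)"
  define NP where "NP = card (UNIV :: ('n set \<times> 'n set) set)"
  have NP0: "NP > 0" unfolding NP_def by (simp add: card_gt_0_iff)
  define \<eta> where "\<eta> = c * th^(2*m*n)"
  have \<eta>0: "\<eta> > 0" using c th0 by (simp add: \<eta>_def)
  define B0 where "B0 = min 1 (c * th^(2*m*n) / (2 * real NP))"
  have B00: "B0 > 0" using c th0 NP0 by (simp add: B0_def)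
  have ev: "\<forall>\<^sub>F t in sequentially. R * m \<le> t \<and> 1 \<le> t
      \<and> real n * (2 * exp (-2 * real t * \<epsilon>\<^sup>2)) < 1/2
      \<and> real n * (2 * exp (-2 * real t * (\<delta>/2)\<^sup>2)) < \<eta>/4
      \<and> 2^m * 4^(R*m) * (1/2::real)^t < B0"
    using eventually_ge_at_top[of "R*m"] eventually_ge_at_top[of 1]
      order_tendstoD(2)[OF exp_lim[OF \<epsilon>0, of "real n"], of "1/2"]
      order_tendstoD(2)[OF exp_lim[of "\<delta>/2" "real n"], of "\<eta>/4"]
      order_tendstoD(2)[OF half_lim[of "2^m * 4^(R*m)"] B00] \<delta>0 \<eta>0
    by (auto elim: eventually_elim2 eventually_mono intro!: eventually_conj)
  then obtain t0 where t0: "\<And>t. t \<ge> t0 \<Longrightarrow> R * m \<le> t \<and> 1 \<le> t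
      \<and> real n * (2 * exp (-2 * real t * \<epsilon>\<^sup>2)) < 1/2
      \<and> real n * (2 * exp (-2 * real t * (\<delta>/2)\<^sup>2)) < \<eta>/4
      \<and> 2^m * 4^(R*m) * (1/2::real)^t < B0"
    unfolding eventually_sequentially by blast
  show ?thesis
  proof (intro exI[of _ \<epsilon>] conjI \<epsilon>0 exI[of _ t0] allI impI ballI)
    fix t :: nat and p assume tt0: "t0 \<le> t" and pK: "p \<in> K"
    note tt = t0[OF tt0]
    have t1: "t > 0" and Rm: "R * m \<le> t" using tt by auto
    define tau where "tau = 2^m * (2^t * (1/4::real)^(t - R*m))"
    have tau_eq': "tau = 2^m * 4^(R*m) * (1/2::real)^t" unfolding tau_def using tau_eq[OF Rm] by simp
    have tau1: "tau \<le> 1" and tauB: "tau \<le> c * th^(2*m*n) / (2 * real NP)"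
      using tt unfolding tau_eq' B0_def by auto
    have tau0: "tau \<ge> 0" unfolding tau_def by simp
    have pc: "p \<in> unit_cube" using pK assms(1) by auto
    have fp01: "0 \<le> f p" "f p \<le> 1" using assms(4) pK by auto
    define X where "X = Xbar_pmf t p"
    define NN where "NN = linf_nbhd K \<epsilon>"
    define EE where "EE = {y. f (PiK y) \<ge> 1/2}"
    have "UNIV - NN \<subseteq> {x. \<exists>i. \<epsilon> \<le> \<bar>x i - p i\<bar>}"
    proof
      fix x assume "x \<in> UNIV - NN"
      hence "\<not> linf_dist x p < \<epsilon>" using pK unfolding NN_def linf_nbhd_def by auto
      thus "x \<in> {x. \<exists>i. \<epsilon> \<le> \<bar>x i - p i\<bar>}" unfolding linf_less_iff by (auto simp: not_less)
    qed
    hence "measure_pmf.prob X (UNIV - NN) \<le> measure_pmf.prob X {x. \<exists>i. \<epsilon> \<le> \<bar>x i - p i\<bar>}"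
      by (intro measure_pmf.finite_measure_mono) auto
    also have "\<dots> \<le> real n * (2 * exp (-2 * real t * \<epsilon>\<^sup>2))"
      unfolding X_def n_def using Xbar_dev[OF pc t1, of \<epsilon>] \<epsilon>0 by simp
    finally have "measure_pmf.prob X (UNIV - NN) \<le> 1/2" using tt by linarith
    moreover have "measure_pmf.prob X (UNIV - NN) = 1 - measure_pmf.prob X NN"
      using measure_pmf.prob_compl[of NN X] by simp
    ultimately have hN: "measure_pmf.prob X NN \<ge> 1/2" by linarith
    have hY: "measure_pmf.prob (Y_pmf t \<epsilon> K p) EE = measure_pmf.prob X (NN \<inter> EE) / measure_pmf.prob X NN"
      unfolding Y_pmf_def X_def[symmetric] NN_def[symmetric] by (rule cond_measure) (use hN in linarith)
    have hY2: "measure_pmf.prob (Y_pmf t \<epsilon> K p) EE \<le> 2 * measure_pmf.prob X (NN \<inter> EE)"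
    proof -
      have a: "0 \<le> measure_pmf.prob X (NN \<inter> EE)" by simp
      have "measure_pmf.prob X (NN \<inter> EE) / measure_pmf.prob X NN \<le> measure_pmf.prob X (NN \<inter> EE) / (1/2)"
        by (rule divide_left_mono) (use a hN in auto)
      thus ?thesis using hY by simp
    qed
    have hS: "measure_pmf.prob X (NN \<inter> EE) = measure_pmf.prob X (NN \<inter> EE \<inter> set_pmf X)"
      by (simp add: measure_Int_set_pmf)
    have key: "x \<in> unit_cube \<and> PiK x \<in> K \<and> linf_dist (PiK x) x < \<epsilon> \<and> 1/2 \<le> f (PiK x)"
      if "x \<in> NN \<inter> EE \<inter> set_pmf X" for x
    proof -
      have xc: "x \<in> unit_cube" using Xbar_support_cube[OF pc] that unfolding X_def by auto
      have "x \<in> linf_nbhd K \<epsilon>" using that NN_def by simp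
      then obtain q where q: "q \<in> K" "linf_dist x q < \<epsilon>" unfolding linf_nbhd_def by blast
      have "linf_dist (PiK x) x \<le> linf_dist q x" using assms(7) xc q by auto
      hence "linf_dist (PiK x) x < \<epsilon>" using q linf_sym[of x q] by linarith
      thus ?thesis using xc assms(6) that unfolding EE_def by auto
    qed
    have goal: "measure_pmf.prob (Y_pmf t \<epsilon> K p) EE \<le> 7/2 * f p"
    proof (cases "f p \<ge> 2/7")
      case True
      have "measure_pmf.prob (Y_pmf t \<epsilon> K p) EE \<le> 1" by simp
      thus ?thesis using True by linarith
    next
      case False
      show ?thesis
      proof (cases "f p \<ge> \<eta>")
        case True
        have "NN \<inter> EE \<inter> set_pmf X \<subseteq> {x. \<exists>i. \<delta>/2 \<le> \<bar>x i - p i\<bar>}"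
        proof
          fix x assume x: "x \<in> NN \<inter> EE \<inter> set_pmf X"
          note k = key[OF x]
          have "\<bar>f (PiK x) - f p\<bar> \<ge> 3/14" using k False by auto
          hence "\<not> linf_dist (PiK x) p < \<delta>" using UC[of "PiK x" p] k pK by auto
          moreover have "linf_dist (PiK x) p \<le> linf_dist (PiK x) x + linf_dist x p" by (rule linf_triangle)
          ultimately have "linf_dist x p \<ge> \<delta>/2" using k unfolding \<epsilon>_def by linarith
          moreover obtain i where "\<bar>x i - p i\<bar> = linf_dist x p" using linf_attained by blast
          ultimately have "\<delta>/2 \<le> \<bar>x i - p i\<bar>" by linarith
          thus "x \<in> {x. \<exists>i. \<delta>/2 \<le> \<bar>x i - p i\<bar>}" by blast
        qed
        hence "measure_pmf.prob X (NN \<inter> EE \<inter> set_pmf X) \<le> measure_pmf.prob X {x. \<exists>i. \<delta>/2 \<le> \<bar>x i - p i\<bar>}"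
          by (intro measure_pmf.finite_measure_mono) auto
        also have "\<dots> \<le> real n * (2 * exp (-2 * real t * (\<delta>/2)\<^sup>2))"
          unfolding X_def n_def using Xbar_dev[OF pc t1, of "\<delta>/2"] \<delta>0 by simp
        finally have "measure_pmf.prob X (NN \<inter> EE) \<le> \<eta>/4" using tt hS by linarith
        thus ?thesis using hY2 True fp01 by linarith
      next
        case small: False
        define pat where "pat ab = {x. \<forall>i. x i \<in> Sset R (i \<in> fst ab) (i \<in> snd ab)}" for ab :: "'n set \<times> 'n set"
        define Bad where "Bad = {ab :: 'n set \<times> 'n set. \<not> (\<forall>q\<in>K \<inter> faceC (fst ab) (snd ab). f q \<le> 0)}"
        have cover: "NN \<inter> EE \<inter> set_pmf X \<subseteq> (\<Union>ab\<in>Bad. pat ab)"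
        proof
          fix x assume x: "x \<in> NN \<inter> EE \<inter> set_pmf X"
          note k = key[OF x]
          define ab where "ab = ({i. x i < \<gamma>}, {i. 1 - \<gamma> < x i})"
          have xp: "x \<in> pat ab" unfolding pat_def ab_def Sset_def \<gamma>_def by auto
          have "ab \<in> Bad"
          proof (rule ccontr)
            assume "ab \<notin> Bad"
            hence good: "\<forall>q\<in>K \<inter> faceC (fst ab) (snd ab). f q \<le> 0" unfolding Bad_def by auto
            define y where "y = (\<lambda>i. if x i < \<gamma> then 0 else if 1 - \<gamma> < x i then 1 else x i)"
            have yF: "y \<in> faceC (fst ab) (snd ab)" unfolding y_def ab_def faceC_def using \<gamma>0 by auto
            have x01: "0 \<le> x i" "x i \<le> 1" for i using k unfolding unit_cube_def by auto
            have "\<bar>x i - y i\<bar> < \<gamma>" for i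
              using x01[of i] \<gamma>0 unfolding y_def by auto
            hence xy: "linf_dist x y < \<gamma>" by (simp add: linf_less_iff)
            have "linf_dist (PiK x) y \<le> linf_dist (PiK x) x + linf_dist x y" by (rule linf_triangle)
            hence lt: "linf_dist (PiK x) y < e0" using xy k R_e0 unfolding \<epsilon>_def \<gamma>_def by linarith
            have "PiK x \<in> Kh" using k unfolding Kh_def by auto
            hence "e0 \<le> linf_dist (PiK x) y" using sepP[OF good] yF by blast
            thus False using lt by linarith
          qed
          thus "x \<in> (\<Union>ab\<in>Bad. pat ab)" using xp by blast
        qed
        define W where "W = ((1/th)^(2*m))^n"
        have W0: "W \<ge> 0" unfolding W_def using th0 by simp
        have Wth: "W * th^(2*m*n) = 1" unfolding W_def using th0
          by (simp add: power_mult[symmetric] power_mult_distrib[symmetric])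
        have patb: "measure_pmf.prob X (pat ab) \<le> tau * W * (f p / c)" if ab: "ab \<in> Bad" for ab
        proof -
          obtain q where q: "q \<in> K" "q \<in> faceC (fst ab) (snd ab)" "f q > 0" using ab unfolding Bad_def by auto
          have fpb: "f p \<ge> c * (\<Prod>i\<in>UNIV. qf (i\<in>fst ab) (i\<in>snd ab) (p i)) ^ m"
            by (rule poly_qf[OF assms(1) _ PB q pK]) (use c in simp)
          have p01: "0 \<le> p i" "p i \<le> 1" for i using pc by (auto simp: unit_cube_def)
          have "\<exists>j. \<not> natural ((1/4)^R) (j\<in>fst ab) (j\<in>snd ab) (p j)"
          proof (rule ccontr)
            assume "\<not> ?thesis"
            hence nat: "natural th (i\<in>fst ab) (i\<in>snd ab) (p i)" for i unfolding th_def by auto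
            have "(\<Prod>i\<in>(UNIV::'n set). th^2) \<le> (\<Prod>i\<in>UNIV. qf (i\<in>fst ab) (i\<in>snd ab) (p i))"
              by (rule prod_mono) (use natural_qf[OF nat] th0 p01 in auto)
            hence "(th^2)^n \<le> (\<Prod>i\<in>UNIV. qf (i\<in>fst ab) (i\<in>snd ab) (p i))" unfolding n_def by simp
            hence "((th^2)^n)^m \<le> (\<Prod>i\<in>UNIV. qf (i\<in>fst ab) (i\<in>snd ab) (p i))^m"
              by (intro power_mono) (use th0 in auto)
            hence "c * th^(2*m*n) \<le> c * (\<Prod>i\<in>UNIV. qf (i\<in>fst ab) (i\<in>snd ab) (p i))^m"
              using c by (simp add: power_mult[symmetric] mult.commute mult.left_commute)
            thus False using fpb small unfolding \<eta>_def by linarith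
          qed
          then obtain j where j: "\<not> natural ((1/4)^R) (j\<in>fst ab) (j\<in>snd ab) (p j)" by blast
          have "measure_pmf.prob X (pat ab) \<le> tau * ((1/(1/4)^R)^(2*m))^CARD('n) * (\<Prod>i\<in>UNIV. qf (i\<in>fst ab) (i\<in>snd ab) (p i)) ^ m"
            unfolding X_def pat_def tau_def using pattern_prob[OF R2 t1 Rm pc _ j] tau1 tau_def by simp
          also have "\<dots> = tau * W * (\<Prod>i\<in>UNIV. qf (i\<in>fst ab) (i\<in>snd ab) (p i)) ^ m"
            unfolding W_def th_def n_def by simp
          also have "\<dots> \<le> tau * W * (f p / c)"
            using fpb c tau0 W0 by (intro mult_left_mono) (auto simp: field_simps)
          finally show ?thesis .
        qed
        have "measure_pmf.prob X (NN \<inter> EE \<inter> set_pmf X) \<le> measure_pmf.prob X (\<Union>ab\<in>Bad. pat ab)"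
          using cover by (intro measure_pmf.finite_measure_mono) auto
        also have "\<dots> \<le> (\<Sum>ab\<in>Bad. measure_pmf.prob X (pat ab))"
          by (rule measure_pmf.finite_measure_subadditive_finite) auto
        also have "\<dots> \<le> real (card Bad) * (tau * W * (f p / c))"
          by (rule sum_bounded_above) (rule patb)
        also have "\<dots> \<le> real NP * (tau * W * (f p / c))"
        proof (rule mult_right_mono)
          have "card Bad \<le> NP" unfolding NP_def by (rule card_mono) auto
          thus "real (card Bad) \<le> real NP" by simp
          show "0 \<le> tau * W * (f p / c)" using tau0 W0 c fp01 by simp
        qed
        finally have m1: "measure_pmf.prob X (NN \<inter> EE) \<le> real NP * (tau * W * (f p / c))" using hS by simp
        have "2 * real NP * tau \<le> c * th^(2*m*n)" using tauB NP0 by (simp add: field_simps)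
        hence "(2 * real NP * tau) * (W * (f p / c)) \<le> (c * th^(2*m*n)) * (W * (f p / c))"
          using W0 c fp01 by (intro mult_right_mono) auto
        also have "\<dots> = (W * th^(2*m*n)) * f p" using c by (simp add: field_simps)
        also have "\<dots> = f p" using Wth by simp
        finally have "2 * (real NP * (tau * W * (f p / c))) \<le> f p" by (simp add: mult_ac)
        thus ?thesis using hY2 m1 fp01 by linarith
      qed
    qed
    show "f p - 1/4 * measure_pmf.prob (Y_pmf t \<epsilon> K p) {y. f (PiK y) \<ge> 1/2} \<ge> f p / 8"
      using goal unfolding EE_def by linarith
  qed
qed

end
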